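(* Let $\beta$ be a well-posed Salem number of degree $6$ with minimal polynomial $$ P(x)=x^6-ax^{5}-bx^{4}-cx^{3}-bx^{2}-ax+1\qquad (a,b,c\in\mathbb Z). $$ Then $\beta$ is a Parry number, and moreover: (1) if $2\leq -b<c-a+2$, then $$ d_{\beta}(1)=(a-1)\,\big(a+b+1,\ c-a+b+1,\ c-a-1,\ 2a-c-1,\ 2a-c-1,\ c-a-1,\ c-a+b+1,\ a+b+1,\ a-2,\ a-2\big)^{\infty}; $$ (2) if $a-c+2<-b\leq 1$, then $$ d_{\beta}(1)=a\,\big(b+1,\ c-a-1,\ a-1,\ 2a+b-c+1,\ c-a-1,\ c-a-1,\ 2a+b-c+1,\ a-1,\ c-a-1,\ b+1,\ a-1,\ a-1\big)^{\infty}, $$ where each listed entry is a single digit and $(w)^\infty$ denotes infinite repetition of the block $w$.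
   Context: A Salem number is an algebraic integer $\beta>1$ all of whose Galois conjugates have modulus at most $1$, with at least one of modulus exactly $1$. For a polynomial $P(x)=x^6-ax^{5}-bx^{4}-cx^{3}-bx^{2}-ax+1$, its trace polynomial is $Q(y)=y^3-ay^2-(b+3)y-(c-2a)$, characterized by $P(x)/x^3=Q(x+x^{-1})$. A sextic Salem number $\beta$ with minimal polynomial $P$ of this form is well-posed if $Q$ has three real roots $\gamma,\alpha_1,\alpha_2$ with $-1<\alpha_1<0<\alpha_2<1<2<\gamma$. For a real $\beta>1$, the beta transformation is $T_\beta(x)=\beta x-\lfloor \beta x\rfloor$ on $[0,1)$; for $x\in[0,1)$ put $x_n=\lfloor \beta T_\beta^{n-1}(x)\rfloor$ and $d_\beta(x)=x_1x_2x_3\cdots$. The expansion of one is $d_\beta(1):=\lim_{\epsilon\downarrow 0} d_\beta(1-\epsilon)$ (limit in the product topology). $\beta$ is a Parry number if $d_\beta(1)$ is eventually periodic, i.e. of the form $x_1\cdots x_m(x_{m+1}\cdots x_{m+p})^\infty$. *)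

theory Defs
  imports Complex_Main "HOL-Computational_Algebra.Computational_Algebra"
begin

definition is_min_int_poly :: "real \<Rightarrow> int poly \<Rightarrow> bool" where
  "is_min_int_poly \<beta> P \<longleftrightarrow>
     lead_coeff P = 1 \<and>
     irreducible (map_poly (of_int :: int \<Rightarrow> rat) P) \<and>
     poly (map_poly (of_int :: int \<Rightarrow> real) P) \<beta> = 0"

definition salem_number :: "real \<Rightarrow> bool" where
  "salem_number \<beta> \<longleftrightarrow> \<beta> > 1 \<and>
     (\<exists>P. is_min_int_poly \<beta> P \<and>
        (\<forall>z. poly (map_poly (of_int :: int \<Rightarrow> complex) P) z = 0 \<and> z \<noteq> complex_of_real \<beta>
              \<longrightarrow> cmod z \<le> 1) \<and>
        (\<exists>z. poly (map_poly (of_int :: int \<Rightarrow> complex) P) z = 0 \<and> z \<noteq> complex_of_real \<beta>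
              \<and> cmod z = 1))"

definition sextic_P :: "int \<Rightarrow> int \<Rightarrow> int \<Rightarrow> int poly" where
  "sextic_P a b c = [:1, -a, -b, -c, -b, -a, 1:]"

definition trace_Q :: "int \<Rightarrow> int \<Rightarrow> int \<Rightarrow> real \<Rightarrow> real" where
  "trace_Q a b c y = y^3 - of_int a * y^2 - of_int (b+3) * y - of_int (c - 2*a)"

definition well_posed :: "int \<Rightarrow> int \<Rightarrow> int \<Rightarrow> bool" where
  "well_posed a b c \<longleftrightarrow>
     (\<exists>\<gamma> \<alpha>1 \<alpha>2. trace_Q a b c \<gamma> = 0 \<and> trace_Q a b c \<alpha>1 = 0 \<and> trace_Q a b c \<alpha>2 = 0 \<and>
        -1 < \<alpha>1 \<and> \<alpha>1 < 0 \<and> 0 < \<alpha>2 \<and> \<alpha>2 < 1 \<and> 2 < \<gamma>)"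

definition beta_T :: "real \<Rightarrow> real \<Rightarrow> real" where
  "beta_T \<beta> x = \<beta> * x - of_int \<lfloor>\<beta> * x\<rfloor>"

(* digit x_{n+1} of d_beta(x) (0-indexed: beta_digit beta x n = x_{n+1}) *)
definition beta_digit :: "real \<Rightarrow> real \<Rightarrow> nat \<Rightarrow> int" where
  "beta_digit \<beta> x n = \<lfloor>\<beta> * (beta_T \<beta> ^^ n) x\<rfloor>"

(* d is the expansion of one: d = lim_{eps -> 0+} d_beta(1 - eps) in the product topology
   (digits discrete), i.e. each digit eventually stabilises to d n. *)
definition is_expansion_of_one :: "real \<Rightarrow> (nat \<Rightarrow> int) \<Rightarrow> bool" where
  "is_expansion_of_one \<beta> d \<longleftrightarrow>
     (\<forall>n. eventually (\<lambda>\<epsilon>. beta_digit \<beta> (1 - \<epsilon>) n = d n) (at_right 0))"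

definition eventually_periodic :: "(nat \<Rightarrow> int) \<Rightarrow> bool" where
  "eventually_periodic d \<longleftrightarrow> (\<exists>m p. p > 0 \<and> (\<forall>n\<ge>m. d (n + p) = d n))"

definition parry_number :: "real \<Rightarrow> bool" where
  "parry_number \<beta> \<longleftrightarrow> \<beta> > 1 \<and> (\<exists>d. is_expansion_of_one \<beta> d \<and> eventually_periodic d)"

(* the infinite word  pre (blk)^infinity ; blk assumed nonempty *)
definition ult_periodic :: "int list \<Rightarrow> int list \<Rightarrow> nat \<Rightarrow> int" where
  "ult_periodic pre blk n =
     (if n < length pre then pre ! n else blk ! ((n - length pre) mod length blk))"

end

theory Submission
  imports Defs
begin

primrec rem :: "real \<Rightarrow> (nat \<Rightarrow> int) \<Rightarrow> nat \<Rightarrow> real" where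
  "rem \<beta> d 0 = 1"
| "rem \<beta> d (Suc n) = \<beta> * rem \<beta> d n - of_int (d n)"

lemma orbit:
  assumes b: "\<beta> > 1" and rb: "\<And>k. 0 < rem \<beta> d k \<and> rem \<beta> d k \<le> 1"
    and e: "0 < \<epsilon>" and ks: "\<forall>k\<le>n. \<beta>^k * \<epsilon> < rem \<beta> d k"
  shows "(beta_T \<beta> ^^ n) (1 - \<epsilon>) = rem \<beta> d n - \<beta>^n * \<epsilon>"
  using ks
proof (induction n)
  case 0
  then show ?case by simp
next
  case (Suc n)
  then have IH: "(beta_T \<beta> ^^ n) (1 - \<epsilon>) = rem \<beta> d n - \<beta>^n * \<epsilon>" by auto
  have lt: "\<beta>^(Suc n) * \<epsilon> < rem \<beta> d (Suc n)" using Suc.prems by auto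
  have pos: "0 < \<beta>^(Suc n) * \<epsilon>" using b e by simp
  have eq: "\<beta> * (rem \<beta> d n - \<beta>^n * \<epsilon>) = of_int (d n) + (rem \<beta> d (Suc n) - \<beta>^(Suc n) * \<epsilon>)"
    by (simp add: algebra_simps)
  have fl: "\<lfloor>\<beta> * (rem \<beta> d n - \<beta>^n * \<epsilon>)\<rfloor> = d n"
    unfolding eq using lt pos rb[of "Suc n"] by (simp add: floor_eq_iff)
  have "(beta_T \<beta> ^^ Suc n) (1 - \<epsilon>) = beta_T \<beta> ((beta_T \<beta> ^^ n) (1 - \<epsilon>))" by simp
  also have "\<dots> = rem \<beta> d (Suc n) - \<beta>^(Suc n) * \<epsilon>"
    unfolding IH beta_T_def fl by (simp add: algebra_simps)
  finally show ?case .
qed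

lemma digit:
  assumes b: "\<beta> > 1" and rb: "\<And>k. 0 < rem \<beta> d k \<and> rem \<beta> d k \<le> 1"
    and e: "0 < \<epsilon>" and ks: "\<forall>k\<le>Suc n. \<beta>^k * \<epsilon> < rem \<beta> d k"
  shows "beta_digit \<beta> (1 - \<epsilon>) n = d n"
proof -
  have IH: "(beta_T \<beta> ^^ n) (1 - \<epsilon>) = rem \<beta> d n - \<beta>^n * \<epsilon>"
    using orbit[OF b rb e] ks by auto
  have lt: "\<beta>^(Suc n) * \<epsilon> < rem \<beta> d (Suc n)" using ks by auto
  have pos: "0 < \<beta>^(Suc n) * \<epsilon>" using b e by simp
  have eq: "\<beta> * (rem \<beta> d n - \<beta>^n * \<epsilon>) = of_int (d n) + (rem \<beta> d (Suc n) - \<beta>^(Suc n) * \<epsilon>)"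
    by (simp add: algebra_simps)
  have fl: "\<lfloor>\<beta> * (rem \<beta> d n - \<beta>^n * \<epsilon>)\<rfloor> = d n"
    unfolding eq using lt pos rb[of "Suc n"] by (simp add: floor_eq_iff)
  show ?thesis using IH fl by (simp add: beta_digit_def)
qed

lemma ev_small:
  assumes rb: "\<And>k. 0 < rem \<beta> d k"
  shows "eventually (\<lambda>\<epsilon>. \<forall>k\<le>n. \<beta>^k * \<epsilon> < rem \<beta> d k) (at_right (0::real))"
proof (induction n)
  case 0
  have "((\<lambda>\<epsilon>. \<beta>^0 * \<epsilon>) \<longlongrightarrow> \<beta>^0 * 0) (at_right (0::real))"
    by (intro tendsto_intros)
  then have "eventually (\<lambda>\<epsilon>. \<beta>^0 * \<epsilon> < rem \<beta> d 0) (at_right (0::real))"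
    using rb[of 0] by (intro order_tendstoD(2)) auto
  then show ?case by (rule eventually_mono) auto
next
  case (Suc n)
  have "((\<lambda>\<epsilon>. \<beta>^Suc n * \<epsilon>) \<longlongrightarrow> \<beta>^Suc n * 0) (at_right (0::real))"
    by (intro tendsto_intros)
  then have "eventually (\<lambda>\<epsilon>. \<beta>^Suc n * \<epsilon> < rem \<beta> d (Suc n)) (at_right (0::real))"
    using rb[of "Suc n"] by (intro order_tendstoD(2)) auto
  with Suc.IH show ?case
    by (rule eventually_elim2) (auto simp: le_Suc_eq)
qed

lemma expansion:
  assumes b: "\<beta> > 1" and rb: "\<And>k. 0 < rem \<beta> d k \<and> rem \<beta> d k \<le> 1"
  shows "is_expansion_of_one \<beta> d"
  unfolding is_expansion_of_one_def
proof
  fix n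
  have "eventually (\<lambda>\<epsilon>. \<forall>k\<le>Suc n. \<beta>^k * \<epsilon> < rem \<beta> d k) (at_right (0::real))"
    using rb by (intro ev_small) auto
  moreover have "eventually (\<lambda>\<epsilon>. 0 < \<epsilon>) (at_right (0::real))"
    by (rule eventually_at_right_less)
  ultimately show "eventually (\<lambda>\<epsilon>. beta_digit \<beta> (1 - \<epsilon>) n = d n) (at_right 0)"
    by (rule eventually_elim2) (rule digit[OF b rb], auto)
qed

lemma bounds:
  assumes b: "\<beta> > 1"
    and dn: "\<forall>n. d n \<ge> 0"
    and dp: "\<forall>n. \<exists>n'\<ge>n. d n' > 0"
    and cover: "\<forall>k. \<exists>k'\<le>N. rem \<beta> d k = rem \<beta> d k'"
    and lex: "\<forall>m. 1 \<le> m \<and> m \<le> N \<longrightarrow> d m < d 0 \<or> (d m = d 0 \<and> d (Suc m) < d 1)"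
  shows "\<forall>k. 0 < rem \<beta> d k \<and> rem \<beta> d k \<le> 1"
proof -
  let ?S = "rem \<beta> d ` {..N}"
  have fin: "finite ?S" and ne: "?S \<noteq> {}" by auto
  define t where "t = Min ?S"
  define s where "s = Max ?S"
  have tle: "t \<le> rem \<beta> d k" for k
  proof -
    obtain k' where "k' \<le> N" "rem \<beta> d k = rem \<beta> d k'" using cover by blast
    then show ?thesis unfolding t_def by (simp add: fin)
  qed
  have sge: "rem \<beta> d k \<le> s" for k
  proof -
    obtain k' where "k' \<le> N" "rem \<beta> d k = rem \<beta> d k'" using cover by blast
    then show ?thesis unfolding s_def by (simp add: fin)
  qed
  have "t \<in> ?S" unfolding t_def by (rule Min_in[OF fin ne])
  then obtain mt where mt: "rem \<beta> d mt = t" by blast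
  have "s \<in> ?S" unfolding s_def by (rule Max_in[OF fin ne])
  then obtain ms where ms: "ms \<le> N" "rem \<beta> d ms = s" by auto
  have tpos: "t > 0"
  proof (rule ccontr)
    assume "\<not> t > 0"
    then have t0: "t \<le> 0" by simp
    have all: "rem \<beta> d (mt + j) = t" for j
    proof (induction j)
      case 0 then show ?case using mt by simp
    next
      case (Suc j)
      have "rem \<beta> d (mt + Suc j) = \<beta> * t - of_int (d (mt + j))" using Suc by simp
      also have "\<dots> \<le> \<beta> * t" using dn by simp
      also have "\<dots> \<le> t"
      proof -
        have "(\<beta> - 1) * t \<le> 0" using t0 b by (intro mult_nonneg_nonpos) auto
        then show ?thesis by (simp add: algebra_simps)
      qed
      finally show ?case using tle[of "mt + Suc j"] by simp
    qed
    obtain n' where n': "n' \<ge> mt" "d n' > 0" using dp by blast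
    then obtain j where j: "n' = mt + j" by (metis le_add_diff_inverse)
    have "t = \<beta> * t - of_int (d n')" using all[of "Suc j"] all[of j] j by simp
    moreover have "of_int (d n') \<ge> (1::real)" using n' by simp
    ultimately have "t * (\<beta> - 1) \<ge> 1" by (simp add: algebra_simps)
    moreover have "t * (\<beta> - 1) \<le> 0" using t0 b by (simp add: mult_nonpos_nonneg)
    ultimately show False by simp
  qed
  have pos: "0 < rem \<beta> d k" for k using tle[of k] tpos by simp
  have sle: "s \<le> 1"
  proof (rule ccontr)
    assume "\<not> s \<le> 1"
    then have s1: "s > 1" by simp
    have "ms \<noteq> 0" using ms s1 by (cases ms) auto
    then have lx: "d ms < d 0 \<or> (d ms = d 0 \<and> d (Suc ms) < d 1)" using lex ms by auto
    have bs: "\<beta> * (s - 1) \<ge> s - 1"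
    proof -
      have "(\<beta> - 1) * (s - 1) \<ge> 0" using s1 b by simp
      then show ?thesis by (simp add: algebra_simps)
    qed
    have bs2: "\<beta> * (\<beta> * (s - 1)) \<ge> s - 1"
    proof -
      have "(\<beta> - 1) * (\<beta> * (s - 1)) \<ge> 0" using s1 b by simp
      then show ?thesis using bs by (simp add: algebra_simps)
    qed
    have r1: "rem \<beta> d (Suc ms) = \<beta> * s - of_int (d ms)" using ms by simp
    show False
      using lx
    proof
      assume "d ms < d 0"
      then have "of_int (d ms) \<le> (of_int (d 0) - 1 :: real)" by simp
      moreover have "rem \<beta> d 1 = \<beta> - of_int (d 0)" by simp
      moreover have "\<beta> * (s - 1) = \<beta> * s - \<beta>" by (simp add: algebra_simps)
      ultimately have "rem \<beta> d (Suc ms) \<ge> rem \<beta> d 1 + \<beta> * (s - 1) + 1" using r1 by linarith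
      then show False using pos[of 1] bs sge[of "Suc ms"] by simp
    next
      assume h: "d ms = d 0 \<and> d (Suc ms) < d 1"
      then have "of_int (d (Suc ms)) \<le> (of_int (d 1) - 1 :: real)" by simp
      moreover have "rem \<beta> d (Suc (Suc ms)) = \<beta> * (\<beta> * s - of_int (d 0)) - of_int (d (Suc ms))"
        using r1 h by simp
      moreover have "rem \<beta> d 2 = \<beta> * (\<beta> - of_int (d 0)) - of_int (d 1)"
        by (simp add: numeral_2_eq_2)
      moreover have "\<beta> * (\<beta> * (s - 1)) = \<beta> * (\<beta> * s - of_int (d 0)) - \<beta> * (\<beta> - of_int (d 0))"
        by (simp add: algebra_simps)
      ultimately have "rem \<beta> d (Suc (Suc ms)) \<ge> rem \<beta> d 2 + \<beta> * (\<beta> * (s - 1)) + 1"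
        by linarith
      then show False using pos[of 2] bs2 sge[of "Suc (Suc ms)"] by simp
    qed
  qed
  show ?thesis using pos sge sle by (meson order_trans)
qed

lemma period1:
  fixes \<beta> A B C :: real and r D :: "nat \<Rightarrow> real"
  assumes hP: "\<beta>^6 = A*\<beta>^5 + B*\<beta>^4 + C*\<beta>^3 + B*\<beta>^2 + A*\<beta> - 1"
    and r: "\<And>k. r (Suc k) = \<beta> * r k - D k" and r0: "r 0 = 1"
    and d0: "D 0 = (A + (-1))"
    and d1: "D 1 = (A + B + (1))"
    and d2: "D 2 = ((- A) + B + C + (1))"
    and d3: "D 3 = ((- A) + C + (-1))"
    and d4: "D 4 = ((2)*A + (- C) + (-1))"
    and d5: "D 5 = ((2)*A + (- C) + (-1))"
    and d6: "D 6 = ((- A) + C + (-1))"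
    and d7: "D 7 = ((- A) + B + C + (1))"
    and d8: "D 8 = (A + B + (1))"
    and d9: "D 9 = (A + (-2))"
    and d10: "D 10 = (A + (-2))"
  shows "r 11 = r 1"
proof -
  have P0: "(\<beta>^6 - (A*\<beta>^5 + B*\<beta>^4 + C*\<beta>^3 + B*\<beta>^2 + A*\<beta> - 1)) = 0" using hP by simp
  have s1: "r 1 = ((- A) + (1)) + ((1))*\<beta>"
  proof -
    have "r 1 = \<beta> * (((1))) - ((A + (-1)))" using r[of 0] r0 d0 by (simp add: numeral_2_eq_2)
    also have "\<dots> = ((- A) + (1)) + ((1))*\<beta> + 0 * (\<beta>^6 - (A*\<beta>^5 + B*\<beta>^4 + C*\<beta>^3 + B*\<beta>^2 + A*\<beta> - 1))" by (simp add: algebra_simps eval_nat_numeral)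
    finally show ?thesis using P0 by simp
  qed
  have s2: "r 2 = ((- A) + (- B) + (-1)) + ((- A) + (1))*\<beta> + ((1))*\<beta>^2"
  proof -
    have "r 2 = \<beta> * (((- A) + (1)) + ((1))*\<beta>) - ((A + B + (1)))" using r[of 1] s1 d1 by (simp add: numeral_2_eq_2)
    also have "\<dots> = ((- A) + (- B) + (-1)) + ((- A) + (1))*\<beta> + ((1))*\<beta>^2 + 0 * (\<beta>^6 - (A*\<beta>^5 + B*\<beta>^4 + C*\<beta>^3 + B*\<beta>^2 + A*\<beta> - 1))" by (simp add: algebra_simps eval_nat_numeral)
    finally show ?thesis using P0 by simp
  qed
  have s3: "r 3 = (A + (- B) + (- C) + (-1)) + ((- A) + (- B) + (-1))*\<beta> + ((- A) + (1))*\<beta>^2 + ((1))*\<beta>^3"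
  proof -
    have "r 3 = \<beta> * (((- A) + (- B) + (-1)) + ((- A) + (1))*\<beta> + ((1))*\<beta>^2) - (((- A) + B + C + (1)))" using r[of 2] s2 d2 by (simp add: )
    also have "\<dots> = (A + (- B) + (- C) + (-1)) + ((- A) + (- B) + (-1))*\<beta> + ((- A) + (1))*\<beta>^2 + ((1))*\<beta>^3 + 0 * (\<beta>^6 - (A*\<beta>^5 + B*\<beta>^4 + C*\<beta>^3 + B*\<beta>^2 + A*\<beta> - 1))" by (simp add: algebra_simps eval_nat_numeral)
    finally show ?thesis using P0 by simp
  qed
  have s4: "r 4 = (A + (- C) + (1)) + (A + (- B) + (- C) + (-1))*\<beta> + ((- A) + (- B) + (-1))*\<beta>^2 + ((- A) + (1))*\<beta>^3 + ((1))*\<beta>^4"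
  proof -
    have "r 4 = \<beta> * ((A + (- B) + (- C) + (-1)) + ((- A) + (- B) + (-1))*\<beta> + ((- A) + (1))*\<beta>^2 + ((1))*\<beta>^3) - (((- A) + C + (-1)))" using r[of 3] s3 d3 by (simp add: )
    also have "\<dots> = (A + (- C) + (1)) + (A + (- B) + (- C) + (-1))*\<beta> + ((- A) + (- B) + (-1))*\<beta>^2 + ((- A) + (1))*\<beta>^3 + ((1))*\<beta>^4 + 0 * (\<beta>^6 - (A*\<beta>^5 + B*\<beta>^4 + C*\<beta>^3 + B*\<beta>^2 + A*\<beta> - 1))" by (simp add: algebra_simps eval_nat_numeral)
    finally show ?thesis using P0 by simp
  qed
  have s5: "r 5 = ((-2)*A + C + (1)) + (A + (- C) + (1))*\<beta> + (A + (- B) + (- C) + (-1))*\<beta>^2 + ((- A) + (- B) + (-1))*\<beta>^3 + ((- A) + (1))*\<beta>^4 + ((1))*\<beta>^5"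
  proof -
    have "r 5 = \<beta> * ((A + (- C) + (1)) + (A + (- B) + (- C) + (-1))*\<beta> + ((- A) + (- B) + (-1))*\<beta>^2 + ((- A) + (1))*\<beta>^3 + ((1))*\<beta>^4) - (((2)*A + (- C) + (-1)))" using r[of 4] s4 d4 by (simp add: )
    also have "\<dots> = ((-2)*A + C + (1)) + (A + (- C) + (1))*\<beta> + (A + (- B) + (- C) + (-1))*\<beta>^2 + ((- A) + (- B) + (-1))*\<beta>^3 + ((- A) + (1))*\<beta>^4 + ((1))*\<beta>^5 + 0 * (\<beta>^6 - (A*\<beta>^5 + B*\<beta>^4 + C*\<beta>^3 + B*\<beta>^2 + A*\<beta> - 1))" by (simp add: algebra_simps eval_nat_numeral)
    finally show ?thesis using P0 by simp
  qed
  have s6: "r 6 = ((-2)*A + C) + ((- A) + C + (1))*\<beta> + (A + B + (- C) + (1))*\<beta>^2 + (A + (- B) + (-1))*\<beta>^3 + ((- A) + (-1))*\<beta>^4 + ((1))*\<beta>^5"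
  proof -
    have "r 6 = \<beta> * (((-2)*A + C + (1)) + (A + (- C) + (1))*\<beta> + (A + (- B) + (- C) + (-1))*\<beta>^2 + ((- A) + (- B) + (-1))*\<beta>^3 + ((- A) + (1))*\<beta>^4 + ((1))*\<beta>^5) - (((2)*A + (- C) + (-1)))" using r[of 5] s5 d5 by (simp add: )
    also have "\<dots> = ((-2)*A + C) + ((- A) + C + (1))*\<beta> + (A + B + (- C) + (1))*\<beta>^2 + (A + (- B) + (-1))*\<beta>^3 + ((- A) + (-1))*\<beta>^4 + ((1))*\<beta>^5 + ((1)) * (\<beta>^6 - (A*\<beta>^5 + B*\<beta>^4 + C*\<beta>^3 + B*\<beta>^2 + A*\<beta> - 1))" by (simp add: algebra_simps eval_nat_numeral)
    finally show ?thesis using P0 by simp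
  qed
  have s7: "r 7 = (A + (- C)) + ((- A) + C)*\<beta> + ((- A) + B + C + (1))*\<beta>^2 + (A + B + (1))*\<beta>^3 + (A + (-1))*\<beta>^4 + ((-1))*\<beta>^5"
  proof -
    have "r 7 = \<beta> * (((-2)*A + C) + ((- A) + C + (1))*\<beta> + (A + B + (- C) + (1))*\<beta>^2 + (A + (- B) + (-1))*\<beta>^3 + ((- A) + (-1))*\<beta>^4 + ((1))*\<beta>^5) - (((- A) + C + (-1)))" using r[of 6] s6 d6 by (simp add: )
    also have "\<dots> = (A + (- C)) + ((- A) + C)*\<beta> + ((- A) + B + C + (1))*\<beta>^2 + (A + B + (1))*\<beta>^3 + (A + (-1))*\<beta>^4 + ((-1))*\<beta>^5 + ((1)) * (\<beta>^6 - (A*\<beta>^5 + B*\<beta>^4 + C*\<beta>^3 + B*\<beta>^2 + A*\<beta> - 1))" by (simp add: algebra_simps eval_nat_numeral)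
    finally show ?thesis using P0 by simp
  qed
  have s8: "r 8 = (A + (- B) + (- C)) + ((- C))*\<beta> + ((- A) + (- B) + C)*\<beta>^2 + ((- A) + B + (1))*\<beta>^3 + (A + (1))*\<beta>^4 + ((-1))*\<beta>^5"
  proof -
    have "r 8 = \<beta> * ((A + (- C)) + ((- A) + C)*\<beta> + ((- A) + B + C + (1))*\<beta>^2 + (A + B + (1))*\<beta>^3 + (A + (-1))*\<beta>^4 + ((-1))*\<beta>^5) - (((- A) + B + C + (1)))" using r[of 7] s7 d7 by (simp add: )
    also have "\<dots> = (A + (- B) + (- C)) + ((- C))*\<beta> + ((- A) + (- B) + C)*\<beta>^2 + ((- A) + B + (1))*\<beta>^3 + (A + (1))*\<beta>^4 + ((-1))*\<beta>^5 + ((-1)) * (\<beta>^6 - (A*\<beta>^5 + B*\<beta>^4 + C*\<beta>^3 + B*\<beta>^2 + A*\<beta> - 1))" by (simp add: algebra_simps eval_nat_numeral)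
    finally show ?thesis using P0 by simp
  qed
  have s9: "r 9 = ((- A) + (- B)) + ((- B) + (- C))*\<beta> + ((- B) + (- C))*\<beta>^2 + ((- A) + (- B))*\<beta>^3 + ((- A) + (1))*\<beta>^4 + ((1))*\<beta>^5"
  proof -
    have "r 9 = \<beta> * ((A + (- B) + (- C)) + ((- C))*\<beta> + ((- A) + (- B) + C)*\<beta>^2 + ((- A) + B + (1))*\<beta>^3 + (A + (1))*\<beta>^4 + ((-1))*\<beta>^5) - ((A + B + (1)))" using r[of 8] s8 d8 by (simp add: )
    also have "\<dots> = ((- A) + (- B)) + ((- B) + (- C))*\<beta> + ((- B) + (- C))*\<beta>^2 + ((- A) + (- B))*\<beta>^3 + ((- A) + (1))*\<beta>^4 + ((1))*\<beta>^5 + ((-1)) * (\<beta>^6 - (A*\<beta>^5 + B*\<beta>^4 + C*\<beta>^3 + B*\<beta>^2 + A*\<beta> - 1))" by (simp add: algebra_simps eval_nat_numeral)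
    finally show ?thesis using P0 by simp
  qed
  have s10: "r 10 = ((- A) + (1)) + ((- B))*\<beta> + ((- C))*\<beta>^2 + ((- B))*\<beta>^3 + ((- A))*\<beta>^4 + ((1))*\<beta>^5"
  proof -
    have "r 10 = \<beta> * (((- A) + (- B)) + ((- B) + (- C))*\<beta> + ((- B) + (- C))*\<beta>^2 + ((- A) + (- B))*\<beta>^3 + ((- A) + (1))*\<beta>^4 + ((1))*\<beta>^5) - ((A + (-2)))" using r[of 9] s9 d9 by (simp add: )
    also have "\<dots> = ((- A) + (1)) + ((- B))*\<beta> + ((- C))*\<beta>^2 + ((- B))*\<beta>^3 + ((- A))*\<beta>^4 + ((1))*\<beta>^5 + ((1)) * (\<beta>^6 - (A*\<beta>^5 + B*\<beta>^4 + C*\<beta>^3 + B*\<beta>^2 + A*\<beta> - 1))" by (simp add: algebra_simps eval_nat_numeral)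
    finally show ?thesis using P0 by simp
  qed
  have s11: "r 11 = ((- A) + (1)) + ((1))*\<beta>"
  proof -
    have "r 11 = \<beta> * (((- A) + (1)) + ((- B))*\<beta> + ((- C))*\<beta>^2 + ((- B))*\<beta>^3 + ((- A))*\<beta>^4 + ((1))*\<beta>^5) - ((A + (-2)))" using r[of 10] s10 d10 by (simp add: )
    also have "\<dots> = ((- A) + (1)) + ((1))*\<beta> + ((1)) * (\<beta>^6 - (A*\<beta>^5 + B*\<beta>^4 + C*\<beta>^3 + B*\<beta>^2 + A*\<beta> - 1))" by (simp add: algebra_simps eval_nat_numeral)
    finally show ?thesis using P0 by simp
  qed
  show ?thesis using s11 s1 by simp
qed

lemma period2:
  fixes \<beta> A B C :: real and r D :: "nat \<Rightarrow> real"
  assumes hP: "\<beta>^6 = A*\<beta>^5 + B*\<beta>^4 + C*\<beta>^3 + B*\<beta>^2 + A*\<beta> - 1"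
    and r: "\<And>k. r (Suc k) = \<beta> * r k - D k" and r0: "r 0 = 1"
    and d0: "D 0 = (A)"
    and d1: "D 1 = (B + (1))"
    and d2: "D 2 = ((- A) + C + (-1))"
    and d3: "D 3 = (A + (-1))"
    and d4: "D 4 = ((2)*A + B + (- C) + (1))"
    and d5: "D 5 = ((- A) + C + (-1))"
    and d6: "D 6 = ((- A) + C + (-1))"
    and d7: "D 7 = ((2)*A + B + (- C) + (1))"
    and d8: "D 8 = (A + (-1))"
    and d9: "D 9 = ((- A) + C + (-1))"
    and d10: "D 10 = (B + (1))"
    and d11: "D 11 = (A + (-1))"
    and d12: "D 12 = (A + (-1))"
  shows "r 13 = r 1"
proof -
  have P0: "(\<beta>^6 - (A*\<beta>^5 + B*\<beta>^4 + C*\<beta>^3 + B*\<beta>^2 + A*\<beta> - 1)) = 0" using hP by simp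
  have s1: "r 1 = ((- A)) + ((1))*\<beta>"
  proof -
    have "r 1 = \<beta> * (((1))) - ((A))" using r[of 0] r0 d0 by (simp add: numeral_2_eq_2)
    also have "\<dots> = ((- A)) + ((1))*\<beta> + 0 * (\<beta>^6 - (A*\<beta>^5 + B*\<beta>^4 + C*\<beta>^3 + B*\<beta>^2 + A*\<beta> - 1))" by (simp add: algebra_simps eval_nat_numeral)
    finally show ?thesis using P0 by simp
  qed
  have s2: "r 2 = ((- B) + (-1)) + ((- A))*\<beta> + ((1))*\<beta>^2"
  proof -
    have "r 2 = \<beta> * (((- A)) + ((1))*\<beta>) - ((B + (1)))" using r[of 1] s1 d1 by (simp add: numeral_2_eq_2)
    also have "\<dots> = ((- B) + (-1)) + ((- A))*\<beta> + ((1))*\<beta>^2 + 0 * (\<beta>^6 - (A*\<beta>^5 + B*\<beta>^4 + C*\<beta>^3 + B*\<beta>^2 + A*\<beta> - 1))" by (simp add: algebra_simps eval_nat_numeral)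
    finally show ?thesis using P0 by simp
  qed
  have s3: "r 3 = (A + (- C) + (1)) + ((- B) + (-1))*\<beta> + ((- A))*\<beta>^2 + ((1))*\<beta>^3"
  proof -
    have "r 3 = \<beta> * (((- B) + (-1)) + ((- A))*\<beta> + ((1))*\<beta>^2) - (((- A) + C + (-1)))" using r[of 2] s2 d2 by (simp add: )
    also have "\<dots> = (A + (- C) + (1)) + ((- B) + (-1))*\<beta> + ((- A))*\<beta>^2 + ((1))*\<beta>^3 + 0 * (\<beta>^6 - (A*\<beta>^5 + B*\<beta>^4 + C*\<beta>^3 + B*\<beta>^2 + A*\<beta> - 1))" by (simp add: algebra_simps eval_nat_numeral)
    finally show ?thesis using P0 by simp
  qed
  have s4: "r 4 = ((- A) + (1)) + (A + (- C) + (1))*\<beta> + ((- B) + (-1))*\<beta>^2 + ((- A))*\<beta>^3 + ((1))*\<beta>^4"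
  proof -
    have "r 4 = \<beta> * ((A + (- C) + (1)) + ((- B) + (-1))*\<beta> + ((- A))*\<beta>^2 + ((1))*\<beta>^3) - ((A + (-1)))" using r[of 3] s3 d3 by (simp add: )
    also have "\<dots> = ((- A) + (1)) + (A + (- C) + (1))*\<beta> + ((- B) + (-1))*\<beta>^2 + ((- A))*\<beta>^3 + ((1))*\<beta>^4 + 0 * (\<beta>^6 - (A*\<beta>^5 + B*\<beta>^4 + C*\<beta>^3 + B*\<beta>^2 + A*\<beta> - 1))" by (simp add: algebra_simps eval_nat_numeral)
    finally show ?thesis using P0 by simp
  qed
  have s5: "r 5 = ((-2)*A + (- B) + C + (-1)) + ((- A) + (1))*\<beta> + (A + (- C) + (1))*\<beta>^2 + ((- B) + (-1))*\<beta>^3 + ((- A))*\<beta>^4 + ((1))*\<beta>^5"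
  proof -
    have "r 5 = \<beta> * (((- A) + (1)) + (A + (- C) + (1))*\<beta> + ((- B) + (-1))*\<beta>^2 + ((- A))*\<beta>^3 + ((1))*\<beta>^4) - (((2)*A + B + (- C) + (1)))" using r[of 4] s4 d4 by (simp add: )
    also have "\<dots> = ((-2)*A + (- B) + C + (-1)) + ((- A) + (1))*\<beta> + (A + (- C) + (1))*\<beta>^2 + ((- B) + (-1))*\<beta>^3 + ((- A))*\<beta>^4 + ((1))*\<beta>^5 + 0 * (\<beta>^6 - (A*\<beta>^5 + B*\<beta>^4 + C*\<beta>^3 + B*\<beta>^2 + A*\<beta> - 1))" by (simp add: algebra_simps eval_nat_numeral)
    finally show ?thesis using P0 by simp
  qed
  have s6: "r 6 = (A + (- C)) + ((- A) + (- B) + C + (-1))*\<beta> + ((- A) + B + (1))*\<beta>^2 + (A + (1))*\<beta>^3 + ((-1))*\<beta>^4"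
  proof -
    have "r 6 = \<beta> * (((-2)*A + (- B) + C + (-1)) + ((- A) + (1))*\<beta> + (A + (- C) + (1))*\<beta>^2 + ((- B) + (-1))*\<beta>^3 + ((- A))*\<beta>^4 + ((1))*\<beta>^5) - (((- A) + C + (-1)))" using r[of 5] s5 d5 by (simp add: )
    also have "\<dots> = (A + (- C)) + ((- A) + (- B) + C + (-1))*\<beta> + ((- A) + B + (1))*\<beta>^2 + (A + (1))*\<beta>^3 + ((-1))*\<beta>^4 + ((1)) * (\<beta>^6 - (A*\<beta>^5 + B*\<beta>^4 + C*\<beta>^3 + B*\<beta>^2 + A*\<beta> - 1))" by (simp add: algebra_simps eval_nat_numeral)
    finally show ?thesis using P0 by simp
  qed
  have s7: "r 7 = (A + (- C) + (1)) + (A + (- C))*\<beta> + ((- A) + (- B) + C + (-1))*\<beta>^2 + ((- A) + B + (1))*\<beta>^3 + (A + (1))*\<beta>^4 + ((-1))*\<beta>^5"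
  proof -
    have "r 7 = \<beta> * ((A + (- C)) + ((- A) + (- B) + C + (-1))*\<beta> + ((- A) + B + (1))*\<beta>^2 + (A + (1))*\<beta>^3 + ((-1))*\<beta>^4) - (((- A) + C + (-1)))" using r[of 6] s6 d6 by (simp add: )
    also have "\<dots> = (A + (- C) + (1)) + (A + (- C))*\<beta> + ((- A) + (- B) + C + (-1))*\<beta>^2 + ((- A) + B + (1))*\<beta>^3 + (A + (1))*\<beta>^4 + ((-1))*\<beta>^5 + 0 * (\<beta>^6 - (A*\<beta>^5 + B*\<beta>^4 + C*\<beta>^3 + B*\<beta>^2 + A*\<beta> - 1))" by (simp add: algebra_simps eval_nat_numeral)
    finally show ?thesis using P0 by simp
  qed
  have s8: "r 8 = ((-2)*A + (- B) + C) + ((- C) + (1))*\<beta> + (A + (- B) + (- C))*\<beta>^2 + ((- A) + (- B) + (-1))*\<beta>^3 + ((- A) + (1))*\<beta>^4 + ((1))*\<beta>^5"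
  proof -
    have "r 8 = \<beta> * ((A + (- C) + (1)) + (A + (- C))*\<beta> + ((- A) + (- B) + C + (-1))*\<beta>^2 + ((- A) + B + (1))*\<beta>^3 + (A + (1))*\<beta>^4 + ((-1))*\<beta>^5) - (((2)*A + B + (- C) + (1)))" using r[of 7] s7 d7 by (simp add: )
    also have "\<dots> = ((-2)*A + (- B) + C) + ((- C) + (1))*\<beta> + (A + (- B) + (- C))*\<beta>^2 + ((- A) + (- B) + (-1))*\<beta>^3 + ((- A) + (1))*\<beta>^4 + ((1))*\<beta>^5 + ((-1)) * (\<beta>^6 - (A*\<beta>^5 + B*\<beta>^4 + C*\<beta>^3 + B*\<beta>^2 + A*\<beta> - 1))" by (simp add: algebra_simps eval_nat_numeral)
    finally show ?thesis using P0 by simp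
  qed
  have s9: "r 9 = ((- A)) + ((- A) + (- B) + C)*\<beta> + (B + (- C) + (1))*\<beta>^2 + (A + (- B))*\<beta>^3 + ((- A) + (-1))*\<beta>^4 + ((1))*\<beta>^5"
  proof -
    have "r 9 = \<beta> * (((-2)*A + (- B) + C) + ((- C) + (1))*\<beta> + (A + (- B) + (- C))*\<beta>^2 + ((- A) + (- B) + (-1))*\<beta>^3 + ((- A) + (1))*\<beta>^4 + ((1))*\<beta>^5) - ((A + (-1)))" using r[of 8] s8 d8 by (simp add: )
    also have "\<dots> = ((- A)) + ((- A) + (- B) + C)*\<beta> + (B + (- C) + (1))*\<beta>^2 + (A + (- B))*\<beta>^3 + ((- A) + (-1))*\<beta>^4 + ((1))*\<beta>^5 + ((1)) * (\<beta>^6 - (A*\<beta>^5 + B*\<beta>^4 + C*\<beta>^3 + B*\<beta>^2 + A*\<beta> - 1))" by (simp add: algebra_simps eval_nat_numeral)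
    finally show ?thesis using P0 by simp
  qed
  have s10: "r 10 = (A + (- C)) + ((- A) + C)*\<beta>^2 + (B + (1))*\<beta>^3 + (A)*\<beta>^4 + ((-1))*\<beta>^5"
  proof -
    have "r 10 = \<beta> * (((- A)) + ((- A) + (- B) + C)*\<beta> + (B + (- C) + (1))*\<beta>^2 + (A + (- B))*\<beta>^3 + ((- A) + (-1))*\<beta>^4 + ((1))*\<beta>^5) - (((- A) + C + (-1)))" using r[of 9] s9 d9 by (simp add: )
    also have "\<dots> = (A + (- C)) + ((- A) + C)*\<beta>^2 + (B + (1))*\<beta>^3 + (A)*\<beta>^4 + ((-1))*\<beta>^5 + ((1)) * (\<beta>^6 - (A*\<beta>^5 + B*\<beta>^4 + C*\<beta>^3 + B*\<beta>^2 + A*\<beta> - 1))" by (simp add: algebra_simps eval_nat_numeral)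
    finally show ?thesis using P0 by simp
  qed
  have s11: "r 11 = ((- B)) + ((- C))*\<beta> + ((- B))*\<beta>^2 + ((- A))*\<beta>^3 + ((1))*\<beta>^4"
  proof -
    have "r 11 = \<beta> * ((A + (- C)) + ((- A) + C)*\<beta>^2 + (B + (1))*\<beta>^3 + (A)*\<beta>^4 + ((-1))*\<beta>^5) - ((B + (1)))" using r[of 10] s10 d10 by (simp add: )
    also have "\<dots> = ((- B)) + ((- C))*\<beta> + ((- B))*\<beta>^2 + ((- A))*\<beta>^3 + ((1))*\<beta>^4 + ((-1)) * (\<beta>^6 - (A*\<beta>^5 + B*\<beta>^4 + C*\<beta>^3 + B*\<beta>^2 + A*\<beta> - 1))" by (simp add: algebra_simps eval_nat_numeral)
    finally show ?thesis using P0 by simp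
  qed
  have s12: "r 12 = ((- A) + (1)) + ((- B))*\<beta> + ((- C))*\<beta>^2 + ((- B))*\<beta>^3 + ((- A))*\<beta>^4 + ((1))*\<beta>^5"
  proof -
    have "r 12 = \<beta> * (((- B)) + ((- C))*\<beta> + ((- B))*\<beta>^2 + ((- A))*\<beta>^3 + ((1))*\<beta>^4) - ((A + (-1)))" using r[of 11] s11 d11 by (simp add: )
    also have "\<dots> = ((- A) + (1)) + ((- B))*\<beta> + ((- C))*\<beta>^2 + ((- B))*\<beta>^3 + ((- A))*\<beta>^4 + ((1))*\<beta>^5 + 0 * (\<beta>^6 - (A*\<beta>^5 + B*\<beta>^4 + C*\<beta>^3 + B*\<beta>^2 + A*\<beta> - 1))" by (simp add: algebra_simps eval_nat_numeral)
    finally show ?thesis using P0 by simp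
  qed
  have s13: "r 13 = ((- A)) + ((1))*\<beta>"
  proof -
    have "r 13 = \<beta> * (((- A) + (1)) + ((- B))*\<beta> + ((- C))*\<beta>^2 + ((- B))*\<beta>^3 + ((- A))*\<beta>^4 + ((1))*\<beta>^5) - ((A + (-1)))" using r[of 12] s12 d12 by (simp add: )
    also have "\<dots> = ((- A)) + ((1))*\<beta> + ((1)) * (\<beta>^6 - (A*\<beta>^5 + B*\<beta>^4 + C*\<beta>^3 + B*\<beta>^2 + A*\<beta> - 1))" by (simp add: algebra_simps eval_nat_numeral)
    finally show ?thesis using P0 by simp
  qed
  show ?thesis using s13 s1 by simp
qed

lemma wp_constraints:
  assumes "well_posed a b c"
  shows "c \<le> 2*a - 1 \<and> a + b + 3 \<le> c \<and> a - b - 1 \<le> c \<and> 3 - 2*a - 2*b \<le> c"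
proof -
  define A where "A = real_of_int a"
  define B where "B = real_of_int b"
  define C where "C = real_of_int c"
  obtain g x y where Qg: "g^3 - A*g^2 - (B+3)*g - (C - 2*A) = 0"
      and Qx: "x^3 - A*x^2 - (B+3)*x - (C - 2*A) = 0"
      and Qy: "y^3 - A*y^2 - (B+3)*y - (C - 2*A) = 0"
      and x1: "-1 < x" "x < 0" and y1: "0 < y" "y < 1" and g2: "2 < g"
    using assms unfolding well_posed_def trace_Q_def A_def B_def C_def by auto
  have "(g - x) * (g^2 + g*x + x^2 - A*(g+x) - (B+3)) =
      (g^3 - A*g^2 - (B+3)*g - (C - 2*A)) - (x^3 - A*x^2 - (B+3)*x - (C - 2*A))"
    by (simp add: algebra_simps eval_nat_numeral)
  then have "(g - x) * (g^2 + g*x + x^2 - A*(g+x) - (B+3)) = 0" using Qg Qx by simp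
  then have H1: "g^2 + g*x + x^2 - A*(g+x) - (B+3) = 0" using g2 x1 by simp
  have "(g - y) * (g^2 + g*y + y^2 - A*(g+y) - (B+3)) =
      (g^3 - A*g^2 - (B+3)*g - (C - 2*A)) - (y^3 - A*y^2 - (B+3)*y - (C - 2*A))"
    by (simp add: algebra_simps eval_nat_numeral)
  then have "(g - y) * (g^2 + g*y + y^2 - A*(g+y) - (B+3)) = 0" using Qg Qy by simp
  then have H2: "g^2 + g*y + y^2 - A*(g+y) - (B+3) = 0" using g2 y1 by simp
  have "(x - y) * (x + y + g - A) = (g^2 + g*x + x^2 - A*(g+x) - (B+3)) - (g^2 + g*y + y^2 - A*(g+y) - (B+3))"
    by (simp add: algebra_simps eval_nat_numeral)
  then have "(x - y) * (x + y + g - A) = 0" using H1 H2 by simp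
  then have hA: "A = g + x + y" using x1 y1 by simp
  have hB: "B = -(g*x + g*y + x*y) - 3"
    using H1 unfolding hA by (simp add: algebra_simps eval_nat_numeral)
  have hC: "C = g*x*y + 2*(g+x+y)"
    using Qg unfolding hA hB by (simp add: algebra_simps eval_nat_numeral)
  have q1: "A + B - C + 2 = (-1-g)*(-1-x)*(-1-y)"
    unfolding hA hB hC by (simp add: algebra_simps)
  have q0: "2*A - C = g*(-x)*y"
    unfolding hA hB hC by (simp add: algebra_simps)
  have q2: "A - B - C - 2 = (g-1)*((1-x)*(1-y)) * (-1)"
    unfolding hA hB hC by (simp add: algebra_simps)
  have q3: "2 - 2*A - 2*B - C = (g-2)*((2-x)*(2-y)) * (-1)"
    unfolding hA hB hC by (simp add: algebra_simps)
  have "(-1-g)*(-1-x) > 0" using g2 x1 by (intro mult_neg_neg) auto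
  then have "(-1-g)*(-1-x)*(-1-y) < 0" using y1 by (intro mult_pos_neg) auto
  then have i1: "a + b - c + 2 < 0" using q1 unfolding A_def B_def C_def by linarith
  have "g*(-x) > 0" using g2 x1 by (intro mult_pos_pos) auto
  then have "g*(-x)*y > 0" using y1(1) by (rule mult_pos_pos)
  then have i0: "2*a - c > 0" using q0 unfolding A_def B_def C_def by linarith
  have "(g-1)*((1-x)*(1-y)) > 0" using g2 x1 y1 by simp
  then have i2: "a - b - c - 2 < 0" using q2 unfolding A_def B_def C_def by linarith
  have "(g-2)*((2-x)*(2-y)) > 0" using g2 x1 y1 by simp
  then have i3: "2 - 2*a - 2*b - c < 0" using q3 unfolding A_def B_def C_def by linarith
  show ?thesis using i0 i1 i2 i3 by linarith
qed

lemma cover: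
  assumes p: "p > 0" and per: "\<forall>n\<ge>m. d (n + p) = d n" and rp: "rem \<beta> d (m + p) = rem \<beta> d m"
  shows "\<forall>k. \<exists>k'\<le>m + p. rem \<beta> d k = rem \<beta> d k'"
proof -
  have sh: "rem \<beta> d (m + j + p) = rem \<beta> d (m + j)" for j
  proof (induction j)
    case 0 then show ?case using rp by simp
  next
    case (Suc j)
    have "rem \<beta> d (m + Suc j + p) = \<beta> * rem \<beta> d (m + j + p) - of_int (d (m + j + p))"
      by (simp add: add.commute add.left_commute)
    also have "\<dots> = \<beta> * rem \<beta> d (m + j) - of_int (d (m + j))"
      using Suc per by simp
    finally show ?case by simp
  qed
  have md: "rem \<beta> d (m + i) = rem \<beta> d (m + i mod p)" for i
  proof (induction i rule: less_induct)
    case (less i)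
    show ?case
    proof (cases "i < p")
      case True then show ?thesis by simp
    next
      case False
      then have i: "i = (i - p) + p" by simp
      have "rem \<beta> d (m + i) = rem \<beta> d (m + (i - p) + p)" using i by (metis add.assoc)
      also have "\<dots> = rem \<beta> d (m + (i - p))" by (rule sh)
      also have "\<dots> = rem \<beta> d (m + (i - p) mod p)" using less.IH[of "i - p"] p False by simp
      also have "(i - p) mod p = i mod p" using False by (simp add: le_mod_geq)
      finally show ?thesis .
    qed
  qed
  show ?thesis
  proof
    fix k
    show "\<exists>k'\<le>m + p. rem \<beta> d k = rem \<beta> d k'"
    proof (cases "k < m")
      case True then show ?thesis by (intro exI[of _ k]) auto
    next
      case False
      then have "k = m + (k - m)" by simp
      then have "rem \<beta> d k = rem \<beta> d (m + (k - m) mod p)" using md by metis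
      moreover have "m + (k - m) mod p \<le> m + p" using p by (simp add: less_imp_le)
      ultimately show ?thesis by blast
    qed
  qed
qed

lemma up_per:
  assumes "blk \<noteq> []" "n \<ge> length pre"
  shows "ult_periodic pre blk (n + length blk) = ult_periodic pre blk n"
proof -
  have "n + length blk - length pre = (n - length pre) + length blk" using assms by simp
  then show ?thesis using assms unfolding ult_periodic_def by (simp del: add_diff_assoc2)
qed

lemma up_nonneg:
  assumes "\<forall>x\<in>set pre. 0 \<le> x" "\<forall>x\<in>set blk. 0 \<le> x" "blk \<noteq> []"
  shows "0 \<le> ult_periodic pre blk n"
  using assms unfolding ult_periodic_def by (auto intro!: bspec[OF assms(2)] nth_mem)

lemma up_pos:
  assumes "j < length blk" "blk ! j > 0"
  shows "\<exists>n'\<ge>n. ult_periodic pre blk n' > 0"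
proof (intro exI conjI)
  have "length blk \<ge> 1" using assms by simp
  then show "n \<le> length pre + j + length blk * n" by (metis le_add2 mult_le_mono1 mult_1 trans_le_add2)
  show "ult_periodic pre blk (length pre + j + length blk * n) > 0"
    using assms unfolding ult_periodic_def by simp
qed


lemma poly_sextic: "poly (map_poly (of_int :: int \<Rightarrow> real) (sextic_P a b c)) x = 1 - a*x - b*x^2 - c*x^3 - b*x^4 - a*x^5 + x^6"
  by (simp add: sextic_P_def map_poly_pCons algebra_simps eval_nat_numeral)

lemma case1:
  fixes \<beta> :: real and a b c :: int
  assumes b1: "\<beta> > 1"
    and hP: "\<beta>^6 = a*\<beta>^5 + b*\<beta>^4 + c*\<beta>^3 + b*\<beta>^2 + a*\<beta> - 1"
    and cs: "c \<le> 2*a - 1" "a + b + 3 \<le> c" "a - b - 1 \<le> c" "3 - 2*a - 2*b \<le> c"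
    and bb: "b \<le> -2"
  defines "d \<equiv> ult_periodic [a - 1]
         [a + b + 1, c - a + b + 1, c - a - 1, 2*a - c - 1, 2*a - c - 1,
          c - a - 1, c - a + b + 1, a + b + 1, a - 2, a - 2]"
  shows "is_expansion_of_one \<beta> d \<and> eventually_periodic d"
proof -
  have r11: "rem \<beta> d 11 = rem \<beta> d 1"
    by (rule period1[where A = "of_int a" and B = "of_int b" and C = "of_int c" and D = "\<lambda>k. of_int (d k)",
          OF hP rem.simps(2) rem.simps(1)]) (simp_all add: d_def ult_periodic_def)
  have per0: "\<forall>n\<ge>1. d (n + length [a + b + 1, c - a + b + 1, c - a - 1, 2*a - c - 1, 2*a - c - 1,
          c - a - 1, c - a + b + 1, a + b + 1, a - 2, a - 2]) = d n"
    unfolding d_def by (intro allI impI up_per) auto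
  have len: "length [a + b + 1, c - a + b + 1, c - a - 1, 2*a - c - 1, 2*a - c - 1,
          c - a - 1, c - a + b + 1, a + b + 1, a - 2, a - 2] = 10" by simp
  have per: "\<forall>n\<ge>1. d (n + 10) = d n" using per0 unfolding len .
  have cov: "\<forall>k. \<exists>k'\<le>1 + 10. rem \<beta> d k = rem \<beta> d k'"
    by (rule cover) (use per r11 in auto)
  have dn: "\<forall>n. d n \<ge> 0"
    unfolding d_def using cs bb by (intro allI up_nonneg) auto
  have dp: "\<forall>n. \<exists>n'\<ge>n. d n' > 0"
    unfolding d_def using cs bb by (intro allI up_pos[where j = 0]) auto
  have lex: "\<forall>m. 1 \<le> m \<and> m \<le> 1 + 10 \<longrightarrow> d m < d 0 \<or> (d m = d 0 \<and> d (Suc m) < d 1)"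
  proof (intro allI impI)
    fix m :: nat assume "1 \<le> m \<and> m \<le> 1 + 10"
    then have "m = 1 \<or> m = 2 \<or> m = 3 \<or> m = 4 \<or> m = 5 \<or> m = 6 \<or> m = 7 \<or> m = 8 \<or> m = 9 \<or> m = 10 \<or> m = 11"
      by presburger
    then show "d m < d 0 \<or> (d m = d 0 \<and> d (Suc m) < d 1)"
      using cs bb by (elim disjE; simp add: d_def ult_periodic_def; (linarith | presburger)?)
  qed
  have rb: "\<forall>k. 0 < rem \<beta> d k \<and> rem \<beta> d k \<le> 1"
    by (rule bounds[OF b1 dn dp cov lex])
  have "is_expansion_of_one \<beta> d" using expansion[OF b1] rb by blast
  moreover have "eventually_periodic d"
    unfolding eventually_periodic_def using per by (intro exI[of _ 1] exI[of _ 10]) auto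
  ultimately show ?thesis by blast
qed

lemma case2:
  fixes \<beta> :: real and a b c :: int
  assumes b1: "\<beta> > 1"
    and hP: "\<beta>^6 = a*\<beta>^5 + b*\<beta>^4 + c*\<beta>^3 + b*\<beta>^2 + a*\<beta> - 1"
    and cs: "c \<le> 2*a - 1" "a + b + 3 \<le> c" "a - b - 1 \<le> c" "3 - 2*a - 2*b \<le> c"
    and bb: "-1 \<le> b"
  defines "d \<equiv> ult_periodic [a]
         [b + 1, c - a - 1, a - 1, 2*a + b - c + 1, c - a - 1, c - a - 1,
          2*a + b - c + 1, a - 1, c - a - 1, b + 1, a - 1, a - 1]"
  shows "is_expansion_of_one \<beta> d \<and> eventually_periodic d"
proof -
  have r13: "rem \<beta> d 13 = rem \<beta> d 1"
    by (rule period2[where A = "of_int a" and B = "of_int b" and C = "of_int c" and D = "\<lambda>k. of_int (d k)",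
          OF hP rem.simps(2) rem.simps(1)]) (simp_all add: d_def ult_periodic_def)
  have per0: "\<forall>n\<ge>1. d (n + length [b + 1, c - a - 1, a - 1, 2*a + b - c + 1, c - a - 1, c - a - 1,
          2*a + b - c + 1, a - 1, c - a - 1, b + 1, a - 1, a - 1]) = d n"
    unfolding d_def by (intro allI impI up_per) auto
  have len: "length [b + 1, c - a - 1, a - 1, 2*a + b - c + 1, c - a - 1, c - a - 1,
          2*a + b - c + 1, a - 1, c - a - 1, b + 1, a - 1, a - 1] = 12" by simp
  have per: "\<forall>n\<ge>1. d (n + 12) = d n" using per0 unfolding len .
  have cov: "\<forall>k. \<exists>k'\<le>1 + 12. rem \<beta> d k = rem \<beta> d k'"
    by (rule cover) (use per r13 in auto)
  have dn: "\<forall>n. d n \<ge> 0"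
    unfolding d_def using cs bb by (intro allI up_nonneg) auto
  have dp: "\<forall>n. \<exists>n'\<ge>n. d n' > 0"
    unfolding d_def using cs bb by (intro allI up_pos[where j = 2]) auto
  have lex: "\<forall>m. 1 \<le> m \<and> m \<le> 1 + 12 \<longrightarrow> d m < d 0 \<or> (d m = d 0 \<and> d (Suc m) < d 1)"
  proof (intro allI impI)
    fix m :: nat assume "1 \<le> m \<and> m \<le> 1 + 12"
    then have "m = 1 \<or> m = 2 \<or> m = 3 \<or> m = 4 \<or> m = 5 \<or> m = 6 \<or> m = 7 \<or> m = 8 \<or> m = 9 \<or> m = 10 \<or> m = 11 \<or> m = 12 \<or> m = 13"
      by presburger
    then show "d m < d 0 \<or> (d m = d 0 \<and> d (Suc m) < d 1)"
      using cs bb by (elim disjE; simp add: d_def ult_periodic_def; (linarith | presburger)?)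
  qed
  have rb: "\<forall>k. 0 < rem \<beta> d k \<and> rem \<beta> d k \<le> 1"
    by (rule bounds[OF b1 dn dp cov lex])
  have "is_expansion_of_one \<beta> d" using expansion[OF b1] rb by blast
  moreover have "eventually_periodic d"
    unfolding eventually_periodic_def using per by (intro exI[of _ 1] exI[of _ 12]) auto
  ultimately show ?thesis by blast
qed

theorem proposition1:
  fixes \<beta> :: real and a b c :: int
  assumes "salem_number \<beta>"
    and "is_min_int_poly \<beta> (sextic_P a b c)"
    and "well_posed a b c"
  shows "parry_number \<beta> \<and>
    (2 \<le> -b \<and> -b < c - a + 2 \<longrightarrow>
       is_expansion_of_one \<beta> (ult_periodic [a - 1]
         [a + b + 1, c - a + b + 1, c - a - 1, 2*a - c - 1, 2*a - c - 1,
          c - a - 1, c - a + b + 1, a + b + 1, a - 2, a - 2])) \<and>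
    (a - c + 2 < -b \<and> -b \<le> 1 \<longrightarrow>
       is_expansion_of_one \<beta> (ult_periodic [a]
         [b + 1, c - a - 1, a - 1, 2*a + b - c + 1, c - a - 1, c - a - 1,
          2*a + b - c + 1, a - 1, c - a - 1, b + 1, a - 1, a - 1]))"
proof -
  have b1: "\<beta> > 1" using assms(1) unfolding salem_number_def by simp
  have "poly (map_poly (of_int :: int \<Rightarrow> real) (sextic_P a b c)) \<beta> = 0"
    using assms(2) unfolding is_min_int_poly_def by simp
  then have hP: "\<beta>^6 = a*\<beta>^5 + b*\<beta>^4 + c*\<beta>^3 + b*\<beta>^2 + a*\<beta> - 1"
    unfolding poly_sextic by simp
  have cs: "c \<le> 2*a - 1" "a + b + 3 \<le> c" "a - b - 1 \<le> c" "3 - 2*a - 2*b \<le> c"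
    using wp_constraints[OF assms(3)] by auto
  show ?thesis
  proof (cases "b \<le> -2")
    case True
    note c1 = case1[OF b1 hP cs True]
    then show ?thesis unfolding parry_number_def using b1 True by auto
  next
    case False
    then have bb: "-1 \<le> b" by simp
    note c2 = case2[OF b1 hP cs bb]
    then show ?thesis unfolding parry_number_def using b1 bb by auto
  qed
qed

end
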